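(* $N[k]=N[\bar k]+N[k^\perp]$, where for measurable $j:\mathcal{X}\times\mathcal{X}\to\mathbb{R}$, $N[j]=\int_\mathcal{X}\int_\mathcal{X}j(x,y)^2\,d\mu(x)\,d\mu(y)$, $\bar k(x,y)=\int_\mathcal{G}k(x,gy)\,d\lambda(g)$ and $k^\perp=k-\bar k$.
   Context: $\mathcal{G}$ is a compact, second countable, Hausdorff topological group with Haar probability measure $\lambda$, acting measurably on a nonempty Polish space $\mathcal{X}$; $\mu$ is a $\mathcal{G}$-invariant Borel probability measure on $\mathcal{X}$ with $\mathrm{supp}\,\mu=\mathcal{X}$. $k:\mathcal{X}\times\mathcal{X}\to\mathbb{R}$ is a measurable symmetric positive definite kernel with $k(\cdot,x)$ continuous for all $x$ and $\sup_xk(x,x)<\infty$. *)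

theory Defs
  imports "HOL-Analysis.Analysis" "HOL-Probability.Probability"
begin

text \<open>The group G is modelled as a type 'g carrying a (not necessarily commutative)
group structure, written additively (class group_add), with a topology making it a
topological group (class topological_group_add).\<close>

definition compact_group :: "'g::{topological_group_add, t2_space, second_countable_topology} itself \<Rightarrow> bool" where
  "compact_group _ \<longleftrightarrow> compact (UNIV :: 'g set)"

definition haar_prob :: "'g::topological_group_add measure \<Rightarrow> bool" where
  "haar_prob lam \<longleftrightarrow> sets lam = sets borel \<and> prob_space lam \<and>
     (\<forall>g. \<forall>A\<in>sets borel. emeasure lam ((\<lambda>h. g + h) ` A) = emeasure lam A)"

definition measurable_action :: "('g::topological_group_add \<Rightarrow> 'x::topological_space \<Rightarrow> 'x) \<Rightarrow> bool" where
  "measurable_action act \<longleftrightarrow>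
     (\<forall>x. act 0 x = x) \<and> (\<forall>g h x. act (g + h) x = act g (act h x)) \<and>
     (\<lambda>(g, x). act g x) \<in> measurable (borel \<Otimes>\<^sub>M borel) borel"

definition invariant_full_support_prob ::
    "('g \<Rightarrow> 'x::topological_space \<Rightarrow> 'x) \<Rightarrow> 'x measure \<Rightarrow> bool" where
  "invariant_full_support_prob act mu \<longleftrightarrow> sets mu = sets borel \<and> prob_space mu \<and>
     (\<forall>g. \<forall>A\<in>sets borel. emeasure mu (act g -` A) = emeasure mu A) \<and>
     (\<forall>U. open U \<and> U \<noteq> {} \<longrightarrow> emeasure mu U > 0)"

definition pd_kernel :: "('x \<Rightarrow> 'x \<Rightarrow> real) \<Rightarrow> bool" where
  "pd_kernel k \<longleftrightarrow> (\<forall>x y. k x y = k y x) \<and>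
     (\<forall>(n::nat) (c::nat \<Rightarrow> real) (x::nat \<Rightarrow> 'x).
        (\<Sum>i<n. \<Sum>j<n. c i * c j * k (x i) (x j)) \<ge> 0)"

definition Nnorm :: "'x measure \<Rightarrow> ('x \<Rightarrow> 'x \<Rightarrow> real) \<Rightarrow> real" where
  "Nnorm mu j = (\<integral>y. (\<integral>x. (j x y)\<^sup>2 \<partial>mu) \<partial>mu)"

definition kbar :: "'g measure \<Rightarrow> ('g \<Rightarrow> 'x \<Rightarrow> 'x) \<Rightarrow> ('x \<Rightarrow> 'x \<Rightarrow> real) \<Rightarrow> 'x \<Rightarrow> 'x \<Rightarrow> real" where
  "kbar lam act k x y = (\<integral>g. k x (act g y) \<partial>lam)"

definition kperp :: "'g measure \<Rightarrow> ('g \<Rightarrow> 'x \<Rightarrow> 'x) \<Rightarrow> ('x \<Rightarrow> 'x \<Rightarrow> real) \<Rightarrow> 'x \<Rightarrow> 'x \<Rightarrow> real" where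
  "kperp lam act k x y = k x y - kbar lam act k x y"

end

theory Submission
  imports Defs
begin

lemma left_inv_distr:
  fixes lam :: "'g::{topological_group_add, t2_space, second_countable_topology} measure"
  assumes "haar_prob lam"
  shows "distr lam lam (\<lambda>h. a + h) = lam"
proof -
  have S: "sets lam = sets borel" and L: "\<And>g A. A \<in> sets borel \<Longrightarrow> emeasure lam ((\<lambda>h. g + h) ` A) = emeasure lam A"
    using assms unfolding haar_prob_def by auto
  have sp: "space lam = UNIV" using sets_eq_imp_space_eq[OF S] by simp
  have m: "(\<lambda>h. a + h) \<in> measurable lam lam"
    unfolding measurable_cong_sets[OF S S]
    by (intro borel_measurable_continuous_onI continuous_intros)
  show ?thesis
  proof (rule measure_eqI)
    show "sets (distr lam lam (\<lambda>h. a + h)) = sets lam" by simp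
    fix A assume "A \<in> sets (distr lam lam (\<lambda>h. a + h))"
    hence A: "A \<in> sets borel" using S by simp
    have e: "(\<lambda>h. a + h) -` A \<inter> space lam = (\<lambda>h. - a + h) ` A"
    proof (intro set_eqI iffI)
      fix x assume "x \<in> (\<lambda>h. a + h) -` A \<inter> space lam"
      hence "a + x \<in> A" by simp
      moreover have "x = - a + (a + x)" by (simp add: add.assoc[symmetric])
      ultimately show "x \<in> (\<lambda>h. - a + h) ` A" by blast
    qed (auto simp: sp add.assoc[symmetric])
    show "emeasure (distr lam lam (\<lambda>h. a + h)) A = emeasure lam A"
      using A S by (simp add: emeasure_distr[OF m] e L)
  qed
qed

lemma bounded_integrable:
  fixes f :: "'a \<Rightarrow> real"
  assumes "finite_measure M" "f \<in> borel_measurable M" "\<And>x. \<bar>f x\<bar> \<le> c"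
  shows "integrable M f"
  using finite_measure.integrable_const_bound[OF assms(1), of f c] assms(2,3) by auto

lemma right_inv_distr:
  fixes lam :: "'g::{topological_group_add, t2_space, second_countable_topology} measure"
  assumes H: "haar_prob lam"
  shows "distr lam lam (\<lambda>h. h + g) = lam"
proof -
  have S: "sets lam = sets borel" and P: "prob_space lam"
    using assms unfolding haar_prob_def by auto
  have sp: "space lam = UNIV" using sets_eq_imp_space_eq[OF S] by simp
  have mplus: "(\<lambda>h. h + b) \<in> measurable lam lam" for b
    unfolding measurable_cong_sets[OF S S]
    by (intro borel_measurable_continuous_onI continuous_intros)
  have mplus': "(\<lambda>h. b + h) \<in> measurable lam lam" for b
    unfolding measurable_cong_sets[OF S S]
    by (intro borel_measurable_continuous_onI continuous_intros)
  have mneg: "(\<lambda>h. - h) \<in> measurable lam lam"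
    unfolding measurable_cong_sets[OF S S]
    by (intro borel_measurable_continuous_onI continuous_intros)
  define lt where "lt = distr lam lam uminus"
  have St: "sets lt = sets borel" using S by (simp add: lt_def)
  have Pt: "prob_space lt" unfolding lt_def
    by (rule prob_space.prob_space_distr[OF P]) (use mneg in simp)
  have rt: "distr lt lt (\<lambda>h. h + b) = lt" for b
  proof -
    have m2: "(\<lambda>h. h + b) \<in> measurable lam lam" by (rule mplus)
    have "distr lt lt (\<lambda>h. h + b) = distr lam lam (\<lambda>h. - h + b)"
      unfolding lt_def
      by (subst distr_distr) (use mneg mplus in \<open>auto simp: measurable_cong_sets[OF _ S] comp_def intro!: distr_cong\<close>)
    also have "\<dots> = distr (distr lam lam (\<lambda>h. - b + h)) lam uminus"
      by (subst distr_distr) (use mneg mplus' in \<open>auto simp: comp_def minus_add\<close>)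
    also have "\<dots> = lt" unfolding lt_def left_inv_distr[OF H] ..
    finally show ?thesis .
  qed
  have INT: "integral\<^sup>L lam f = integral\<^sup>L lt f"
    if fm: "f \<in> borel_measurable borel" and fb: "\<And>x. \<bar>f x\<bar> \<le> c" for f :: "'g \<Rightarrow> real" and c
  proof -
    interpret pl: prob_space lam by (rule P)
    interpret pt: prob_space lt by (rule Pt)
    interpret pp: pair_sigma_finite lt lam
      by (intro pair_sigma_finite.intro prob_space_imp_sigma_finite P Pt)
    have fl: "f \<in> borel_measurable lam" "f \<in> borel_measurable lt"
      using fm measurable_cong_sets[OF S refl] measurable_cong_sets[OF St refl] by auto
    have mp: "(\<lambda>(x, y). f (x + y)) \<in> borel_measurable (lt \<Otimes>\<^sub>M lam)"
    proof -
      have "sets (lt \<Otimes>\<^sub>M lam) = sets (borel \<Otimes>\<^sub>M (borel :: 'g measure))"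
        by (rule sets_pair_measure_cong[OF St S])
      also have "\<dots> = sets (borel :: ('g \<times> 'g) measure)" by (simp only: borel_prod)
      finally have sP: "sets (lt \<Otimes>\<^sub>M lam) = sets (borel :: ('g \<times> 'g) measure)" .
      have "(\<lambda>(x, y). f (x + y)) \<in> borel_measurable (borel :: ('g \<times> 'g) measure)"
      proof -
        have "(\<lambda>p::'g\<times>'g. fst p + snd p) \<in> borel_measurable borel"
          by (intro borel_measurable_continuous_onI continuous_intros)
        from measurable_compose[OF this fm] show ?thesis by (simp add: case_prod_beta')
      qed
      then show ?thesis unfolding measurable_cong_sets[OF sP refl] .
    qed
    have ip: "integrable (lt \<Otimes>\<^sub>M lam) (\<lambda>(x, y). f (x + y))"
      by (rule bounded_integrable[OF _ mp, of c])
        (auto intro: prob_space.finite_measure prob_space_pair P Pt fb)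
    have "integral\<^sup>L lam f = (\<integral>h. (\<integral>g. f g \<partial>lam) \<partial>lt)"
      by (simp add: pt.prob_space)
    also have "\<dots> = (\<integral>h. (\<integral>g. f (h + g) \<partial>lam) \<partial>lt)"
    proof (rule Bochner_Integration.integral_cong[OF refl])
      fix h
      have "(\<integral>g. f g \<partial>lam) = integral\<^sup>L (distr lam lam (\<lambda>g. h + g)) f"
        by (simp add: left_inv_distr[OF H])
      also have "\<dots> = (\<integral>g. f (h + g) \<partial>lam)"
        by (rule integral_distr[OF mplus' fl(1)])
      finally show "(\<integral>g. f g \<partial>lam) = (\<integral>g. f (h + g) \<partial>lam)" .
    qed
    also have "\<dots> = (\<integral>g. (\<integral>h. f (h + g) \<partial>lt) \<partial>lam)"
      using pp.Fubini_integral[of "\<lambda>x y. f (x + y)"] ip by simp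
    also have "\<dots> = (\<integral>g. (\<integral>h. f h \<partial>lt) \<partial>lam)"
    proof (rule Bochner_Integration.integral_cong[OF refl])
      fix g
      have mt: "(\<lambda>h. h + g) \<in> measurable lt lt"
        using mplus measurable_cong_sets[OF St St] measurable_cong_sets[OF S S] by auto
      have "(\<integral>h. f h \<partial>lt) = integral\<^sup>L (distr lt lt (\<lambda>h. h + g)) f"
        by (simp add: rt)
      also have "\<dots> = (\<integral>h. f (h + g) \<partial>lt)"
        by (rule integral_distr[OF mt fl(2)])
      finally show "(\<integral>h. f (h + g) \<partial>lt) = (\<integral>h. f h \<partial>lt)" by simp
    qed
    also have "\<dots> = integral\<^sup>L lt f" by (simp add: pl.prob_space)
    finally show ?thesis .
  qed
  have eq: "lt = lam"
  proof (rule measure_eqI)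
    show "sets lt = sets lam" using S St by simp
    fix A assume "A \<in> sets lt"
    hence A: "A \<in> sets borel" using St by simp
    have "measure lam A = measure lt A"
      using INT[of "indicator A" 1] A borel_measurable_indicator[OF A]
      using sets_eq_imp_space_eq[OF S] sets_eq_imp_space_eq[OF St] by simp
    thus "emeasure lt A = emeasure lam A"
      using finite_measure.emeasure_eq_measure[OF prob_space.finite_measure[OF P]] finite_measure.emeasure_eq_measure[OF prob_space.finite_measure[OF Pt]] by simp
  qed
  show ?thesis using rt[of g] unfolding eq .
qed


lemma abs_mult_le: "\<bar>a::real\<bar> \<le> C \<Longrightarrow> \<bar>b\<bar> \<le> D \<Longrightarrow> \<bar>a * b\<bar> \<le> C * D"
  by (simp add: abs_mult mult_mono')

lemma pd_bound:
  assumes "pd_kernel k" "\<forall>x. k x x \<le> C"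
  shows "\<bar>k x y\<bar> \<le> C"
proof -
  have sym: "k y x = k x y" using assms(1) unfolding pd_kernel_def by auto
  have A: "\<forall>(n::nat) (c::nat \<Rightarrow> real) (xs::nat \<Rightarrow> 'a). 0 \<le> (\<Sum>i<n. \<Sum>j<n. c i * c j * k (xs i) (xs j))"
    using assms(1) unfolding pd_kernel_def by blast
  have q: "0 \<le> k x x + 2 * s * k x y + s * s * k y y" for s :: real
  proof -
    have "0 \<le> (\<Sum>i::nat<2. \<Sum>j::nat<2. (\<lambda>i. if i = 0 then 1 else s) i * (\<lambda>i. if i = 0 then 1 else s) j
              * k ((\<lambda>i. if i = 0 then x else y) i) ((\<lambda>i. if i = 0 then x else y) j))"
      by (rule A[rule_format])
    also have "\<dots> = k x x + 2 * s * k x y + s * s * k y y"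
      by (simp add: numeral_2_eq_2 lessThan_Suc sym algebra_simps)
    finally show ?thesis .
  qed
  have "k x x \<le> C" "k y y \<le> C" using assms(2) by auto
  with q[of 1] q[of "-1"] show ?thesis by auto
qed

theorem lemma5p10:
  fixes lam :: "'g::{topological_group_add, t2_space, second_countable_topology} measure"
    and act :: "'g \<Rightarrow> 'x::polish_space \<Rightarrow> 'x"
    and mu :: "'x measure"
    and k :: "'x \<Rightarrow> 'x \<Rightarrow> real"
  assumes "compact_group TYPE('g)"
    and "haar_prob lam"
    and "measurable_action act"
    and "invariant_full_support_prob act mu"
    and "(\<lambda>(x, y). k x y) \<in> borel_measurable (borel \<Otimes>\<^sub>M borel)"
    and "pd_kernel k"
    and "\<And>x. continuous_on UNIV (\<lambda>y. k y x)"
    and "\<exists>C. \<forall>x. k x x \<le> C"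
  shows "Nnorm mu k = Nnorm mu (kbar lam act k) + Nnorm mu (kperp lam act k)"
proof -
  from assms(2) have S_l: "sets lam = sets borel" and P_l: "prob_space lam"
    by (auto simp: haar_prob_def)
  have RI: "\<And>g. distr lam lam (\<lambda>h. h + g) = lam" by (rule right_inv_distr[OF assms(2)])
  from assms(3) have act_add: "\<And>g h x. act (g + h) x = act g (act h x)"
    and act_m[measurable]: "(\<lambda>(g, x). act g x) \<in> measurable (borel \<Otimes>\<^sub>M borel) borel"
    by (auto simp: measurable_action_def)
  from assms(4) have S_m: "sets mu = sets borel" and P_m: "prob_space mu"
    and mu_inv0: "\<And>g A. A \<in> sets borel \<Longrightarrow> emeasure mu (act g -` A) = emeasure mu A"
    by (auto simp: invariant_full_support_prob_def)
  note [measurable_cong] = S_l S_m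
  note Km[measurable] = assms(5)
  have sp_m: "space mu = UNIV" using sets_eq_imp_space_eq[OF S_m] by simp
  have sp_l: "space lam = UNIV" using sets_eq_imp_space_eq[OF S_l] by simp
  interpret lam: prob_space lam by (rule P_l)
  interpret mu: prob_space mu by (rule P_m)
  have P_PP: "prob_space (mu \<Otimes>\<^sub>M mu)" by (intro prob_space_pair P_m)
  interpret PP: pair_sigma_finite mu mu
    by (intro pair_sigma_finite.intro prob_space_imp_sigma_finite P_m)
  interpret PL: pair_sigma_finite "mu \<Otimes>\<^sub>M mu" lam
    by (intro pair_sigma_finite.intro prob_space_imp_sigma_finite P_l P_PP)
  have fin_PP: "finite_measure (mu \<Otimes>\<^sub>M mu)" by (rule prob_space.finite_measure[OF P_PP])
  have fin_PL: "finite_measure ((mu \<Otimes>\<^sub>M mu) \<Otimes>\<^sub>M lam)"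
    by (intro prob_space.finite_measure prob_space_pair P_l P_PP)
  obtain C where C: "\<forall>x. k x x \<le> C" using assms(8) by blast
  have kb: "\<And>x y. \<bar>k x y\<bar> \<le> C" using pd_bound[OF assms(6) C] .
  have actg_m: "act g \<in> measurable mu mu" for g by measurable
  have mu_inv: "distr mu mu (act g) = mu" for g
  proof (rule measure_eqI)
    show "sets (distr mu mu (act g)) = sets mu" by simp
    fix A assume "A \<in> sets (distr mu mu (act g))"
    hence A: "A \<in> sets borel" using S_m by simp
    show "emeasure (distr mu mu (act g)) A = emeasure mu A"
      using A S_m by (simp add: emeasure_distr[OF actg_m] sp_m mu_inv0)
  qed
  define B where "B = kbar lam act k"
  have B_def': "B x y = (\<integral>g. k x (act g y) \<partial>lam)" for x y
    by (simp add: B_def kbar_def)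
  have Bm[measurable]: "(\<lambda>(x, y). B x y) \<in> borel_measurable (borel \<Otimes>\<^sub>M borel)"
    unfolding B_def' by measurable
  have Bb: "\<bar>B x y\<bar> \<le> C" for x y
  proof -
    have i1: "integrable lam (\<lambda>g. \<bar>k x (act g y)\<bar>)"
      by (rule bounded_integrable[of _ _ C]) (auto intro: lam.finite_measure kb)
    have "\<bar>B x y\<bar> \<le> (\<integral>g. \<bar>k x (act g y)\<bar> \<partial>lam)" unfolding B_def' by (rule integral_abs_bound)
    also have "\<dots> \<le> (\<integral>g. C \<partial>lam)" by (rule integral_mono[OF i1]) (auto simp: kb)
    also have "\<dots> = C" by (simp add: lam.prob_space)
    finally show ?thesis .
  qed
  have B_inv: "B x (act g y) = B x y" for x y g
  proof -
    have "B x (act g y) = (\<integral>h. k x (act (h + g) y) \<partial>lam)" by (simp add: B_def' act_add)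
    also have "\<dots> = integral\<^sup>L (distr lam lam (\<lambda>h. h + g)) (\<lambda>h. k x (act h y))"
      by (rule integral_distr[symmetric]) measurable
    also have "\<dots> = B x y" by (simp add: RI B_def')
    finally show ?thesis .
  qed
  define F where "F x y = k x y * B x y" for x y
  have Fm[measurable]: "(\<lambda>(x, y). F x y) \<in> borel_measurable (borel \<Otimes>\<^sub>M borel)"
    unfolding F_def by measurable
  have Fb: "\<bar>F x y\<bar> \<le> C * C" for x y unfolding F_def by (rule abs_mult_le[OF kb Bb])
  have sq: "B x y * B x y = (\<integral>g. F x (act g y) \<partial>lam)" for x y
    by (simp add: F_def B_inv) (simp add: B_def')
  have shift: "(\<integral>p. (case p of (x, y) \<Rightarrow> F x (act g y)) \<partial>(mu \<Otimes>\<^sub>M mu)) = (\<integral>p. (case p of (x, y) \<Rightarrow> F x y) \<partial>(mu \<Otimes>\<^sub>M mu))" for g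
  proof -
    have i1: "integrable (mu \<Otimes>\<^sub>M mu) (\<lambda>(x, y). F x (act g y))"
      by (rule bounded_integrable[OF fin_PP, of _ "C * C"]) (auto simp: Fb)
    have i2: "integrable (mu \<Otimes>\<^sub>M mu) (\<lambda>(x, y). F x y)"
      by (rule bounded_integrable[OF fin_PP, of _ "C * C"]) (auto simp: Fb)
    have "(\<integral>p. (case p of (x, y) \<Rightarrow> F x (act g y)) \<partial>(mu \<Otimes>\<^sub>M mu)) = (\<integral>y. (\<integral>x. F x (act g y) \<partial>mu) \<partial>mu)"
      using PP.integral_snd[OF i1] by simp
    also have "\<dots> = integral\<^sup>L (distr mu mu (act g)) (\<lambda>y. \<integral>x. F x y \<partial>mu)"
      by (rule integral_distr[symmetric]) measurable
    also have "\<dots> = (\<integral>y. (\<integral>x. F x y \<partial>mu) \<partial>mu)" by (simp add: mu_inv)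
    also have "\<dots> = (\<integral>p. (case p of (x, y) \<Rightarrow> F x y) \<partial>(mu \<Otimes>\<^sub>M mu))"
      using PP.integral_snd[OF i2] by simp
    finally show ?thesis .
  qed
  have key: "(\<integral>p. (case p of (x, y) \<Rightarrow> B x y * B x y) \<partial>(mu \<Otimes>\<^sub>M mu)) = (\<integral>p. (case p of (x, y) \<Rightarrow> F x y) \<partial>(mu \<Otimes>\<^sub>M mu))"
  proof -
    have i3: "integrable ((mu \<Otimes>\<^sub>M mu) \<Otimes>\<^sub>M lam) (case_prod (\<lambda>p g. case p of (x, y) \<Rightarrow> F x (act g y)))"
      by (rule bounded_integrable[OF fin_PL, of _ "C * C"]) (auto simp: Fb split: prod.splits)
    have "(\<integral>p. (case p of (x, y) \<Rightarrow> B x y * B x y) \<partial>(mu \<Otimes>\<^sub>M mu))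
        = (\<integral>p. (\<integral>g. (case p of (x, y) \<Rightarrow> F x (act g y)) \<partial>lam) \<partial>(mu \<Otimes>\<^sub>M mu))"
      by (rule Bochner_Integration.integral_cong[OF refl]) (auto simp: sq split: prod.splits)
    also have "\<dots> = (\<integral>g. (\<integral>p. (case p of (x, y) \<Rightarrow> F x (act g y)) \<partial>(mu \<Otimes>\<^sub>M mu)) \<partial>lam)"
      using PL.Fubini_integral[OF i3] by simp
    also have "\<dots> = (\<integral>g. (\<integral>p. (case p of (x, y) \<Rightarrow> F x y) \<partial>(mu \<Otimes>\<^sub>M mu)) \<partial>lam)"
      by (simp add: shift)
    also have "\<dots> = (\<integral>p. (case p of (x, y) \<Rightarrow> F x y) \<partial>(mu \<Otimes>\<^sub>M mu))"
      by (simp add: lam.prob_space)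
    finally show ?thesis .
  qed
  have NN: "Nnorm mu j = (\<integral>p. (case p of (x, y) \<Rightarrow> (j x y)\<^sup>2) \<partial>(mu \<Otimes>\<^sub>M mu))"
    if jm: "(\<lambda>(x, y). j x y) \<in> borel_measurable (borel \<Otimes>\<^sub>M borel)" and jb: "\<And>x y. \<bar>j x y\<bar> \<le> D" for j D
  proof -
    have "integrable (mu \<Otimes>\<^sub>M mu) (\<lambda>(x, y). (j x y)\<^sup>2)"
      by (rule bounded_integrable[OF fin_PP, of _ "D * D"])
        (use jm in measurable, auto simp: power2_eq_square intro: abs_mult_le[OF jb jb])
    from PP.integral_snd[OF this] show ?thesis by (simp add: Nnorm_def)
  qed
  have kpB: "kperp lam act k = (\<lambda>x y. k x y - B x y)" by (simp add: kperp_def B_def fun_eq_iff)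
  have kBb: "\<bar>k x y - B x y\<bar> \<le> C + C" for x y using kb[of x y] Bb[of x y] by linarith
  have i_k2: "integrable (mu \<Otimes>\<^sub>M mu) (\<lambda>(x, y). (k x y)\<^sup>2)"
    by (rule bounded_integrable[OF fin_PP, of _ "C * C"]) (auto simp: power2_eq_square intro: abs_mult_le[OF kb kb])
  have i_B2: "integrable (mu \<Otimes>\<^sub>M mu) (\<lambda>(x, y). (B x y)\<^sup>2)"
    by (rule bounded_integrable[OF fin_PP, of _ "C * C"]) (auto simp: power2_eq_square intro: abs_mult_le[OF Bb Bb])
  have i_kB2: "integrable (mu \<Otimes>\<^sub>M mu) (\<lambda>(x, y). (k x y - B x y)\<^sup>2)"
  proof (rule bounded_integrable[OF fin_PP, of _ "(C + C) * (C + C)"])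
    show "(\<lambda>(x, y). (k x y - B x y)\<^sup>2) \<in> borel_measurable (mu \<Otimes>\<^sub>M mu)" by measurable
    have kBsq: "\<bar>(k a b - B a b)\<^sup>2\<bar> \<le> (C + C) * (C + C)" for a b
      unfolding power2_eq_square by (rule abs_mult_le[OF kBb kBb])
    fix p :: "'x \<times> 'x"
    show "\<bar>case p of (x, y) \<Rightarrow> (k x y - B x y)\<^sup>2\<bar> \<le> (C + C) * (C + C)"
      by (cases p) (simp only: case_prod_conv kBsq)
  qed
  have i_F: "integrable (mu \<Otimes>\<^sub>M mu) (\<lambda>(x, y). F x y)"
    by (rule bounded_integrable[OF fin_PP, of _ "C * C"]) (auto simp: Fb)
  have i_BB: "integrable (mu \<Otimes>\<^sub>M mu) (\<lambda>(x, y). B x y * B x y)"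
    by (rule bounded_integrable[OF fin_PP, of _ "C * C"]) (auto intro: abs_mult_le[OF Bb Bb])
  define f1 where "f1 = (\<lambda>p. case p of (x, y) \<Rightarrow> (B x y)\<^sup>2)"
  define f2 where "f2 = (\<lambda>p. case p of (x, y) \<Rightarrow> (k x y - B x y)\<^sup>2)"
  define f3 where "f3 = (\<lambda>p. case p of (x, y) \<Rightarrow> F x y)"
  define f4 where "f4 = (\<lambda>p. case p of (x, y) \<Rightarrow> B x y * B x y)"
  have pw: "(\<lambda>p. case p of (x, y) \<Rightarrow> (k x y)\<^sup>2) = (\<lambda>p. (f1 p + f2 p) + 2 * (f3 p - f4 p))"
    by (auto simp: fun_eq_iff F_def f1_def f2_def f3_def f4_def power2_eq_square algebra_simps)
  have i1: "integrable (mu \<Otimes>\<^sub>M mu) f1" "integrable (mu \<Otimes>\<^sub>M mu) f2"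
    "integrable (mu \<Otimes>\<^sub>M mu) f3" "integrable (mu \<Otimes>\<^sub>M mu) f4"
    unfolding f1_def f2_def f3_def f4_def by (fact i_B2 i_kB2 i_F i_BB)+
  have "Nnorm mu k = (\<integral>p. (case p of (x, y) \<Rightarrow> (k x y)\<^sup>2) \<partial>(mu \<Otimes>\<^sub>M mu))"
    by (rule NN[OF Km kb])
  also have "\<dots> = integral\<^sup>L (mu \<Otimes>\<^sub>M mu) f1 + integral\<^sup>L (mu \<Otimes>\<^sub>M mu) f2
      + 2 * (integral\<^sup>L (mu \<Otimes>\<^sub>M mu) f3 - integral\<^sup>L (mu \<Otimes>\<^sub>M mu) f4)"
    unfolding pw
    by (simp add: i1 Bochner_Integration.integral_add Bochner_Integration.integral_diff integrable_add integrable_diff)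
  also have "\<dots> = integral\<^sup>L (mu \<Otimes>\<^sub>M mu) f1 + integral\<^sup>L (mu \<Otimes>\<^sub>M mu) f2"
  proof -
    have "integral\<^sup>L (mu \<Otimes>\<^sub>M mu) f3 = integral\<^sup>L (mu \<Otimes>\<^sub>M mu) f4"
      unfolding f3_def f4_def key ..
    thus ?thesis by simp
  qed
  also have "\<dots> = Nnorm mu B + Nnorm mu (kperp lam act k)"
    unfolding kpB f1_def f2_def by (simp add: NN[OF Bm Bb] NN[OF _ kBb])
  finally show ?thesis by (simp add: B_def)
qed

end
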